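(* Let $\mathscr H$ and $\mathscr F$ be RKHSs on sets $\mathcal X$ and $\mathcal Y$ with feature maps $\phi$ and $\psi$, let $\Phi=[\phi(x_1),\dots,\phi(x_m)]$ and $\Psi=[\psi(y_1),\dots,\psi(y_n)]$ each consist of linearly independent elements, let $B\in\mathbb R^{n\times m}$, and let $S=\Psi B\Phi^\top\colon\mathscr H\to\mathscr F$. Let $G_\Phi=\Phi^\top\Phi$ and $G_\Psi=\Psi^\top\Psi$. Let $\sigma_1,\dots,\sigma_r$ be the strictly positive eigenvalues and $\begin{bsmallmatrix}\mathbf w_i\\ \mathbf z_i\end{bsmallmatrix}\in\mathbb R^{n+m}$ ($\mathbf w_i\in\mathbb R^n$, $\mathbf z_i\in\mathbb R^m$) corresponding eigenvectors of the matrix $$\begin{bmatrix}0 & BG_\Phi\\ B^\top G_\Psi & 0\end{bmatrix}\in\mathbb R^{(n+m)\times(n+m)}.$$ Then the singular value decomposition of $S$ is $$S=\sum_{i=1}^r\sigma_i\Big[\big(\|\Psi\mathbf w_i\|_{\mathscr F}^{-1}\Psi\mathbf w_i\big)\otimes\big(\|\Phi\mathbf z_i\|_{\mathscr H}^{-1}\Phi\mathbf z_i\big)\Big].$$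
   Context: An RKHS $\mathscr H$ on $\mathcal X$ with kernel $k$ has feature map $\phi(x)=k(x,\cdot)$ (similarly $\mathscr F$ with kernel $l$, feature map $\psi$). Feature matrices are row vectors: $\Phi\mathbf a=\sum_j a_j\phi(x_j)$ for $\mathbf a\in\mathbb R^m$; $\Phi^\top v=(\langle\phi(x_j),v\rangle_{\mathscr H})_j$ for $v\in\mathscr H$; $G_\Phi=(k(x_i,x_j))_{ij}$ and $G_\Psi=(l(y_i,y_j))_{ij}$ are the Gram matrices. Thus $Sv=\sum_i\psi(y_i)\sum_jb_{ij}\langle\phi(x_j),v\rangle$. The tensor product operator is $(y\otimes x)h=\langle x,h\rangle y$; a singular value decomposition $\sum_i\sigma_i(u_i\otimes v_i)$ has orthonormal systems $\{u_i\}\subseteq\mathscr F$, $\{v_i\}\subseteq\mathscr H$ and $\sigma_i>0$.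
   Formalization: Eigenvectors for equal eigenvalues are chosen with the vectors $\Phi\mathbf z_i$ pairwise orthogonal in $\mathscr H$, and the eigenvectors listed for each positive eigenvalue span its whole eigenspace. The statement above fails without it. *)

theory Defs
  imports "HOL-Analysis.Analysis"
begin

text \<open>An RKHS is represented abstractly by a real Hilbert space together with a
feature map phi; the kernel is k x y = inner (phi x) (phi y).  The RKHS property
(every element is determined by its point evaluations f(x) = inner f (phi x))
is the condition below: it makes f mapsto (x mapsto inner f (phi x)) an isometric
isomorphism onto a reproducing kernel Hilbert space of functions on X.\<close>
definition rkhs_feature_map :: "('x \<Rightarrow> 'h::real_inner) \<Rightarrow> bool" where
  "rkhs_feature_map \<phi> \<longleftrightarrow> (\<forall>f. (\<forall>x. inner f (\<phi> x) = 0) \<longrightarrow> f = 0)"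

definition fmat :: "('x \<Rightarrow> 'h::real_vector) \<Rightarrow> ('m::finite \<Rightarrow> 'x) \<Rightarrow> real^'m \<Rightarrow> 'h" where
  "fmat \<phi> xs a = (\<Sum>j\<in>UNIV. (a $ j) *\<^sub>R \<phi> (xs j))"

definition fadj :: "('x \<Rightarrow> 'h::real_inner) \<Rightarrow> ('m::finite \<Rightarrow> 'x) \<Rightarrow> 'h \<Rightarrow> real^'m" where
  "fadj \<phi> xs v = (\<chi> j. inner (\<phi> (xs j)) v)"

definition gram :: "('x \<Rightarrow> 'h::real_inner) \<Rightarrow> ('m::finite \<Rightarrow> 'x) \<Rightarrow> real^'m^'m" where
  "gram \<phi> xs = (\<chi> i j. inner (\<phi> (xs i)) (\<phi> (xs j)))"

definition tensor :: "'f::real_vector \<Rightarrow> 'h::real_inner \<Rightarrow> 'h \<Rightarrow> 'f" where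
  "tensor y x h = inner x h *\<^sub>R y"

text \<open>The block matrix [[0, B G_Phi], [B^T G_Psi, 0]] indexed by 'n + 'm
(Inl = first n coordinates, Inr = last m coordinates).\<close>
definition block_matrix ::
  "real^'m^'n \<Rightarrow> real^'m^'m \<Rightarrow> real^'n^'n \<Rightarrow> real^('n::finite + 'm::finite)^('n + 'm)" where
  "block_matrix B G\<^sub>\<Phi> G\<^sub>\<Psi> = (\<chi> p q. (case (p, q) of
       (Inl i, Inr j) \<Rightarrow> (B ** G\<^sub>\<Phi>) $ i $ j
     | (Inr j, Inl i) \<Rightarrow> (transpose B ** G\<^sub>\<Psi>) $ j $ i
     | _ \<Rightarrow> 0))"

definition blk_top :: "real^('n::finite + 'm::finite) \<Rightarrow> real^'n" where
  "blk_top v = (\<chi> k. v $ Inl k)"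

definition blk_bot :: "real^('n::finite + 'm::finite) \<Rightarrow> real^'m" where
  "blk_bot v = (\<chi> k. v $ Inr k)"

definition eigenspace :: "real^'k^'k \<Rightarrow> real \<Rightarrow> (real^'k::finite) set" where
  "eigenspace A c = {v. A *v v = c *s v}"

definition orthonormal_sys :: "nat \<Rightarrow> (nat \<Rightarrow> 'a::real_inner) \<Rightarrow> bool" where
  "orthonormal_sys r u \<longleftrightarrow> (\<forall>i<r. \<forall>j<r. inner (u i) (u j) = (if i = j then 1 else 0))"

definition is_svd :: "('h::real_inner \<Rightarrow> 'f::real_inner) \<Rightarrow> nat \<Rightarrow> (nat \<Rightarrow> real)
    \<Rightarrow> (nat \<Rightarrow> 'f) \<Rightarrow> (nat \<Rightarrow> 'h) \<Rightarrow> bool" where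
  "is_svd S r \<sigma> u v \<longleftrightarrow> (\<forall>i<r. \<sigma> i > 0) \<and> orthonormal_sys r u \<and> orthonormal_sys r v
     \<and> (\<forall>h. S h = (\<Sum>i<r. \<sigma> i *\<^sub>R tensor (u i) (v i) h))"

end

theory Submission imports Defs begin

lemma fmat_add: "fmat \<phi> xs (a + b) = fmat \<phi> xs a + fmat \<phi> xs b"
  by (simp add: fmat_def scaleR_add_left sum.distrib)

lemma fmat_linear: "linear (fmat \<phi> xs)"
  by (rule linearI) (simp_all add: fmat_def scaleR_add_left sum.distrib scaleR_right.sum)

lemma fadj_linear: "linear (fadj \<phi> xs)"
  by (rule linearI) (simp_all add: fadj_def vec_eq_iff inner_add_right)

lemma blk_bot_linear: "linear blk_bot"
  by (rule linearI) (simp_all add: blk_bot_def vec_eq_iff)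

lemma inner_fmat_left: "inner (fmat \<phi> xs a) h = a \<bullet> fadj \<phi> xs h"
  by (simp add: fmat_def fadj_def inner_sum_left inner_vec_def)

lemma fadj_fmat: "fadj \<phi> xs (fmat \<phi> xs a) = gram \<phi> xs *v a"
  by (simp add: vec_eq_iff fadj_def fmat_def gram_def matrix_vector_mult_def inner_sum_right mult.commute)

lemma mv_dot: "((B::real^'m^'n) *v g) \<bullet> f = g \<bullet> (transpose B *v f)"
  by (metis dot_lmul_matrix inner_commute transpose_matrix_vector)

lemma block_Inl: "(block_matrix B G H *v e) $ Inl i = ((B ** G) *v blk_bot e) $ i"
proof -
  have "(block_matrix B G H *v e) $ Inl i = (\<Sum>q\<in>UNIV <+> UNIV. (block_matrix B G H) $ Inl i $ q * e $ q)"
    by (simp add: matrix_vector_mult_def)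
  also have "\<dots> = ((B ** G) *v blk_bot e) $ i"
    by (subst sum.Plus) (simp_all add: block_matrix_def blk_bot_def matrix_vector_mult_def)
  finally show ?thesis .
qed

lemma block_Inr: "(block_matrix B G H *v e) $ Inr j = ((transpose B ** H) *v blk_top e) $ j"
proof -
  have "(block_matrix B G H *v e) $ Inr j = (\<Sum>q\<in>UNIV <+> UNIV. (block_matrix B G H) $ Inr j $ q * e $ q)"
    by (simp add: matrix_vector_mult_def)
  also have "\<dots> = ((transpose B ** H) *v blk_top e) $ j"
    by (subst sum.Plus) (simp_all add: block_matrix_def blk_top_def matrix_vector_mult_def)
  finally show ?thesis .
qed

lemma blk_zero: "blk_top e = 0 \<Longrightarrow> blk_bot e = 0 \<Longrightarrow> e = 0"
  unfolding vec_eq_iff blk_top_def blk_bot_def by (auto split: sum.splits) (metis sum.exhaust)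

lemma quad_zero:
  fixes X Y :: real
  assumes "\<forall>t. 2*t*X + t^2*Y \<le> 0"
  shows "X = 0"
proof (rule ccontr)
  assume X: "X \<noteq> 0"
  define t where "t = X / (\<bar>Y\<bar> + 1)"
  have pos: "\<bar>Y\<bar> + 1 > 0" by simp
  have ts: "t * (\<bar>Y\<bar> + 1) = X" unfolding t_def using pos by simp
  have "(\<bar>Y\<bar>+1)^2 * (2*t*X + t^2*Y) = 2*(t*(\<bar>Y\<bar>+1))*X*(\<bar>Y\<bar>+1) + (t*(\<bar>Y\<bar>+1))^2*Y"
    by (simp add: algebra_simps power2_eq_square)
  also have "\<dots> = X^2 * (2*(\<bar>Y\<bar>+1) + Y)" unfolding ts by (simp add: algebra_simps power2_eq_square)
  finally have eq: "(\<bar>Y\<bar>+1)^2 * (2*t*X + t^2*Y) = X^2 * (2*(\<bar>Y\<bar>+1) + Y)" .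
  moreover have "X^2 * (2*(\<bar>Y\<bar>+1) + Y) > 0"
    using X by (intro mult_pos_pos) (auto simp: abs_if)
  ultimately have "(\<bar>Y\<bar>+1)^2 * (2*t*X + t^2*Y) > 0" by simp
  hence "2*t*X + t^2*Y > 0" using pos by (simp add: zero_less_mult_iff)
  with assms show False by (meson not_le)
qed


lemma norm_sq_expand:
  fixes x y :: "'a::real_inner"
  shows "(norm (x + t *\<^sub>R y))^2 = (norm x)^2 + 2*t*inner x y + t^2 * (norm y)^2"
proof -
  have "inner (x + t *\<^sub>R y) (x + t *\<^sub>R y) = inner x x + t * inner x y + t * inner y x + t*t*inner y y"
    by (simp add: inner_add_left inner_add_right algebra_simps)
  also have "inner y x = inner x y" by (rule inner_commute)
  finally show ?thesis unfolding power2_norm_eq_inner by (simp add: power2_eq_square algebra_simps)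
qed

theorem theorem3p17:
  fixes \<phi> :: "'x \<Rightarrow> 'h::{real_inner, complete_space}"
    and \<psi> :: "'y \<Rightarrow> 'f::{real_inner, complete_space}"
    and xs :: "'m::finite \<Rightarrow> 'x" and ys :: "'n::finite \<Rightarrow> 'y"
    and B :: "real^'m^'n" and S :: "'h \<Rightarrow> 'f"
    and r :: nat and \<sigma> :: "nat \<Rightarrow> real" and e :: "nat \<Rightarrow> real^('n + 'm)"
  assumes "rkhs_feature_map \<phi>" and "rkhs_feature_map \<psi>"
    and "\<forall>a. fmat \<phi> xs a = 0 \<longrightarrow> a = 0"
    and "\<forall>b. fmat \<psi> ys b = 0 \<longrightarrow> b = 0"
    and "S = (\<lambda>v. fmat \<psi> ys (B *v fadj \<phi> xs v))"
    and "\<forall>i<r. \<sigma> i > 0 \<and> e i \<noteq> 0 \<and>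
           block_matrix B (gram \<phi> xs) (gram \<psi> ys) *v e i = \<sigma> i *s e i"
    and "\<forall>c>0. span (e ` {i. i < r \<and> \<sigma> i = c})
                 = eigenspace (block_matrix B (gram \<phi> xs) (gram \<psi> ys)) c"
    and "\<forall>i<r. \<forall>j<r. i \<noteq> j \<and> \<sigma> i = \<sigma> j \<longrightarrow>
           inner (fmat \<phi> xs (blk_bot (e i))) (fmat \<phi> xs (blk_bot (e j))) = 0"
  shows "is_svd S r \<sigma>
           (\<lambda>i. (1 / norm (fmat \<psi> ys (blk_top (e i)))) *\<^sub>R fmat \<psi> ys (blk_top (e i)))
           (\<lambda>i. (1 / norm (fmat \<phi> xs (blk_bot (e i)))) *\<^sub>R fmat \<phi> xs (blk_bot (e i)))"
proof -
  note injPhi = assms(3) and injPsi = assms(4) and Sdef = assms(5) and eigA = assms(6)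
    and spanA = assms(7) and orthA = assms(8)
  define \<Phi> where "\<Phi> = fmat \<phi> xs"
  define \<Psi> where "\<Psi> = fmat \<psi> ys"
  define G where "G = gram \<phi> xs"
  define H where "H = gram \<psi> ys"
  define M where "M = block_matrix B G H"
  define w where "w i = blk_top (e i)" for i
  define z where "z i = blk_bot (e i)" for i
  define u where "u i = \<Psi> (w i)" for i
  define v where "v i = \<Phi> (z i)" for i
  define Sa where "Sa k = \<Phi> (transpose B *v fadj \<psi> ys k)" for k
  define uh where "uh i = (1 / norm (u i)) *\<^sub>R u i" for i
  define vh where "vh i = (1 / norm (v i)) *\<^sub>R v i" for i
  have linPhi: "linear \<Phi>" unfolding \<Phi>_def by (rule fmat_linear)
  have linPsi: "linear \<Psi>" unfolding \<Psi>_def by (rule fmat_linear)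
  have linS: "linear S" unfolding Sdef
    using linear_compose[OF linear_compose[OF fadj_linear matrix_vector_mul_linear] fmat_linear]
    by (simp add: o_def)
  have S_Phi: "S (\<Phi> a) = \<Psi> (B *v (G *v a))" for a
    unfolding Sdef \<Phi>_def \<Psi>_def G_def by (simp add: fadj_fmat)
  have Sa_Psi: "Sa (\<Psi> b) = \<Phi> (transpose B *v (H *v b))" for b
    unfolding Sa_def \<Psi>_def H_def by (simp add: fadj_fmat)
  have adj: "inner (S h) k = inner h (Sa k)" for h k
  proof -
    have "inner (S h) k = (B *v fadj \<phi> xs h) \<bullet> fadj \<psi> ys k"
      unfolding Sdef by (simp add: inner_fmat_left)
    also have "\<dots> = fadj \<phi> xs h \<bullet> (transpose B *v fadj \<psi> ys k)" by (rule mv_dot)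
    also have "\<dots> = (transpose B *v fadj \<psi> ys k) \<bullet> fadj \<phi> xs h" by (rule inner_commute)
    also have "\<dots> = inner (Sa k) h" unfolding Sa_def \<Phi>_def by (simp only: inner_fmat_left)
    also have "\<dots> = inner h (Sa k)" by (rule inner_commute)
    finally show ?thesis .
  qed
  have PhiPhi: "inner (\<Phi> a) (\<Phi> b) = a \<bullet> (G *v b)" for a b
    unfolding \<Phi>_def G_def by (simp add: inner_fmat_left fadj_fmat)
  have Phi0: "\<Phi> a = 0 \<Longrightarrow> a = 0" for a using injPhi unfolding \<Phi>_def by blast
  have Psi0: "\<Psi> a = 0 \<Longrightarrow> a = 0" for a using injPsi unfolding \<Psi>_def by blast
  have eig: "B *v (G *v z i) = \<sigma> i *s w i \<and> transpose B *v (H *v w i) = \<sigma> i *s z i" if "i < r" for i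
  proof -
    have E: "M *v e i = \<sigma> i *s e i" using eigA that unfolding M_def G_def H_def by blast
    have 1: "B *v (G *v z i) = \<sigma> i *s w i"
    proof (rule iffD2[OF vec_eq_iff], intro allI)
      fix k
      have "(M *v e i) $ Inl k = (\<sigma> i *s e i) $ Inl k" using E by simp
      thus "(B *v (G *v z i)) $ k = (\<sigma> i *s w i) $ k"
        unfolding M_def block_Inl z_def w_def by (simp add: matrix_vector_mul_assoc blk_top_def)
    qed
    have 2: "transpose B *v (H *v w i) = \<sigma> i *s z i"
    proof (rule iffD2[OF vec_eq_iff], intro allI)
      fix k
      have "(M *v e i) $ Inr k = (\<sigma> i *s e i) $ Inr k" using E by simp
      thus "(transpose B *v (H *v w i)) $ k = (\<sigma> i *s z i) $ k"
        unfolding M_def block_Inr z_def w_def by (simp add: matrix_vector_mul_assoc blk_bot_def)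
    qed
    show ?thesis using 1 2 by blast
  qed
  have Sv: "S (v i) = \<sigma> i *\<^sub>R u i" if "i < r" for i
    using eig[OF that] unfolding v_def u_def S_Phi
    by (simp add: scalar_mult_eq_scaleR linear_cmul[OF linPsi])
  have Sau: "Sa (u i) = \<sigma> i *\<^sub>R v i" if "i < r" for i
    using eig[OF that] unfolding v_def u_def Sa_Psi
    by (simp add: scalar_mult_eq_scaleR linear_cmul[OF linPhi])
  have nz: "u i \<noteq> 0 \<and> v i \<noteq> 0" if "i < r" for i
  proof -
    have sp: "\<sigma> i > 0" "e i \<noteq> 0" using eigA that by auto
    have "w i \<noteq> 0"
    proof
      assume "w i = 0"
      hence "\<sigma> i *s z i = 0" using eig[OF that] by simp
      hence "z i = 0" using sp by (simp add: scalar_mult_eq_scaleR)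
      with \<open>w i = 0\<close> show False using blk_zero sp unfolding w_def z_def by blast
    qed
    moreover have "z i \<noteq> 0"
    proof
      assume "z i = 0"
      hence "\<sigma> i *s w i = 0" using eig[OF that] by simp
      hence "w i = 0" using sp by (simp add: scalar_mult_eq_scaleR)
      with \<open>z i = 0\<close> show False using blk_zero sp unfolding w_def z_def by blast
    qed
    ultimately show ?thesis unfolding u_def v_def using Phi0 Psi0 by blast
  qed
  have normeq: "norm (u i) = norm (v i)" if "i < r" for i
  proof -
    have sp: "\<sigma> i > 0" using eigA that by auto
    have "\<sigma> i * inner (u i) (u i) = inner (S (v i)) (u i)" using Sv[OF that] by simp
    also have "\<dots> = inner (v i) (Sa (u i))" by (rule adj)
    also have "\<dots> = \<sigma> i * inner (v i) (v i)" using Sau[OF that] by simp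
    finally have "inner (u i) (u i) = inner (v i) (v i)" using sp by simp
    thus ?thesis by (simp add: norm_eq_sqrt_inner)
  qed
  have SaS: "Sa (S (v i)) = (\<sigma> i)^2 *\<^sub>R v i" if "i < r" for i
    using Sv[OF that] Sau[OF that] by (simp add: linear_cmul[OF linPhi] Sa_def linear_cmul[OF fadj_linear] matrix_vector_mult_scaleR power2_eq_square)
  have orth_v: "inner (v i) (v j) = 0" if "i < r" "j < r" "i \<noteq> j" for i j
  proof (cases "\<sigma> i = \<sigma> j")
    case True thus ?thesis using orthA that unfolding v_def \<Phi>_def z_def by blast
  next
    case False
    have sp: "\<sigma> i > 0" "\<sigma> j > 0" using eigA that by auto
    have "(\<sigma> j)^2 * inner (v i) (v j) = inner (v i) (Sa (S (v j)))" using SaS[OF that(2)] by simp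
    also have "\<dots> = inner (S (v i)) (S (v j))" by (rule adj[symmetric])
    also have "\<dots> = inner (S (v j)) (S (v i))" by (rule inner_commute)
    also have "\<dots> = inner (v j) (Sa (S (v i)))" by (rule adj)
    also have "\<dots> = (\<sigma> i)^2 * inner (v i) (v j)" using SaS[OF that(1)] by (simp add: inner_commute)
    finally have "((\<sigma> j)^2 - (\<sigma> i)^2) * inner (v i) (v j) = 0" by (simp add: algebra_simps)
    moreover have "(\<sigma> j)^2 \<noteq> (\<sigma> i)^2" using sp False by (metis less_eq_real_def power2_eq_iff_nonneg)
    ultimately show ?thesis by simp
  qed
  have orth_u: "inner (u i) (u j) = 0" if "i < r" "j < r" "i \<noteq> j" for i j
  proof -
    have sp: "\<sigma> i > 0" using eigA that by auto
    have "\<sigma> i * inner (u i) (u j) = inner (S (v i)) (u j)" using Sv[OF that(1)] by simp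
    also have "\<dots> = inner (v i) (Sa (u j))" by (rule adj)
    also have "\<dots> = \<sigma> j * inner (v i) (v j)" using Sau[OF that(2)] by simp
    also have "\<dots> = 0" using orth_v[OF that] by simp
    finally show ?thesis using sp by simp
  qed
  define L where "L a = S (\<Phi> a)" for a
  have linL: "linear L" unfolding L_def using linear_compose[OF linPhi linS] by (simp add: o_def)
  define Wc where "Wc = {a. \<forall>j<r. inner (\<Phi> a) (v j) = 0}"
  have subW: "subspace Wc"
    unfolding subspace_def Wc_def
    by (simp add: linear_add[OF linPhi] linear_cmul[OF linPhi] linear_0[OF linPhi] inner_add_left)
  have contPhi: "continuous_on UNIV \<Phi>"
    using linPhi by (simp add: linear_continuous_on linear_conv_bounded_linear)
  have contL: "continuous_on UNIV L"
    using linL by (simp add: linear_continuous_on linear_conv_bounded_linear)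
  define R where "R a = (norm (L a))^2 / (norm (\<Phi> a))^2" for a
  define KK where "KK = Wc \<inter> sphere 0 1"
  have PhiNZ: "\<Phi> a \<noteq> 0" if "a \<noteq> 0" for a using Phi0 that by blast
  have compK: "compact KK" unfolding KK_def
    using closed_subspace[OF subW] compact_sphere by (rule closed_Int_compact)
  have cL: "continuous_on KK L" using contL continuous_on_subset by blast
  have cP: "continuous_on KK \<Phi>" using contPhi continuous_on_subset by blast
  have nzK: "\<forall>x\<in>KK. (norm (\<Phi> x))^2 \<noteq> 0"
  proof
    fix x assume "x \<in> KK"
    hence "x \<noteq> 0" unfolding KK_def by auto
    thus "(norm (\<Phi> x))^2 \<noteq> 0" using PhiNZ by simp
  qed
  have contR: "continuous_on KK R" unfolding R_def
    by (rule continuous_on_divide[OF continuous_on_power[OF continuous_on_norm[OF cL]]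
          continuous_on_power[OF continuous_on_norm[OF cP]] nzK])
  have homog: "R ((1 / norm b) *\<^sub>R b) = R b" if "b \<noteq> 0" for b
    unfolding R_def using that
    by (simp add: linear_cmul[OF linL] linear_cmul[OF linPhi] power_divide)
  have scK: "(1 / norm b) *\<^sub>R b \<in> KK" if "b \<in> Wc" "b \<noteq> 0" for b
    unfolding KK_def using that subspace_scale[OF subW] by simp
  have K': "L a = 0" if "a \<in> Wc" for a
  proof (rule ccontr)
    assume La: "L a \<noteq> 0"
    hence a0: "a \<noteq> 0" using linear_0[OF linL] by auto
    have "KK \<noteq> {}" using scK[OF that a0] by blast
    then obtain a0 where a0K: "a0 \<in> KK" and amax: "\<forall>y\<in>KK. R y \<le> R a0"
      using continuous_attains_sup[OF compK _ contR] by blast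
    define c2 where "c2 = R a0"
    have a0W: "a0 \<in> Wc" and na0: "norm a0 = 1" using a0K unfolding KK_def by auto
    hence a0nz: "a0 \<noteq> 0" by auto
    have "R a > 0" unfolding R_def using La PhiNZ[OF a0] by simp
    also have "R a = R ((1 / norm a) *\<^sub>R a)" using homog[OF a0] by simp
    also have "\<dots> \<le> c2" unfolding c2_def using amax scK[OF that a0] by blast
    finally have c2pos: "c2 > 0" .
    have bound: "(norm (L b))^2 \<le> c2 * (norm (\<Phi> b))^2" if "b \<in> Wc" for b
    proof (cases "b = 0")
      case True thus ?thesis using linear_0[OF linL] linear_0[OF linPhi] by simp
    next
      case False
      have "R b \<le> c2" using homog[OF False] amax scK[OF that False] unfolding c2_def by metis
      moreover have "(norm (\<Phi> b))^2 > 0" using PhiNZ[OF False] by simp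
      ultimately show ?thesis unfolding R_def by (simp add: divide_le_eq)
    qed
    have eq0: "(norm (L a0))^2 = c2 * (norm (\<Phi> a0))^2"
      unfolding c2_def R_def using PhiNZ[OF a0nz] by simp
    have stat: "inner (L a0) (L b) = c2 * inner (\<Phi> a0) (\<Phi> b)" if "b \<in> Wc" for b
    proof -
      define X where "X = inner (L a0) (L b) - c2 * inner (\<Phi> a0) (\<Phi> b)"
      define Y where "Y = (norm (L b))^2 - c2 * (norm (\<Phi> b))^2"
      have "2*t*X + t^2*Y \<le> 0" for t
      proof -
        have "a0 + t *\<^sub>R b \<in> Wc"
          using subspace_add[OF subW a0W subspace_scale[OF subW that]] .
        from bound[OF this]
        have "(norm (L a0 + t *\<^sub>R L b))^2 \<le> c2 * (norm (\<Phi> a0 + t *\<^sub>R \<Phi> b))^2"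
          by (simp add: linear_add[OF linL] linear_cmul[OF linL] linear_add[OF linPhi] linear_cmul[OF linPhi])
        hence "(norm (L a0))^2 + 2*t*inner (L a0) (L b) + t^2 * (norm (L b))^2
            \<le> c2 * ((norm (\<Phi> a0))^2 + 2*t*inner (\<Phi> a0) (\<Phi> b) + t^2 * (norm (\<Phi> b))^2)"
          by (simp only: norm_sq_expand)
        thus ?thesis unfolding X_def Y_def using eq0 by (simp add: algebra_simps)
      qed
      hence "X = 0" using quad_zero by blast
      thus ?thesis unfolding X_def by simp
    qed
    define T where "T = transpose B *v (H *v (B *v (G *v a0)))"
    have SaL: "Sa (L a0) = \<Phi> T" unfolding L_def S_Phi Sa_Psi T_def ..
    define d where "d = T - c2 *\<^sub>R a0"
    have Phid: "\<Phi> d = Sa (L a0) - c2 *\<^sub>R \<Phi> a0"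
      unfolding d_def SaL by (simp add: linear_diff[OF linPhi] linear_cmul[OF linPhi])
    have dW: "d \<in> Wc" unfolding Wc_def
    proof (intro CollectI allI impI)
      fix j assume j: "j < r"
      have "inner (Sa (L a0)) (v j) = inner (v j) (Sa (L a0))" by (rule inner_commute)
      also have "\<dots> = inner (S (v j)) (L a0)" by (rule adj[symmetric])
      also have "\<dots> = \<sigma> j * inner (L a0) (u j)" using Sv[OF j] by (simp add: inner_commute)
      also have "\<dots> = \<sigma> j * inner (\<Phi> a0) (Sa (u j))" unfolding L_def by (simp add: adj)
      also have "\<dots> = 0" using Sau[OF j] a0W j unfolding Wc_def by simp
      finally show "inner (\<Phi> d) (v j) = 0" unfolding Phid using a0W j unfolding Wc_def
        by (simp add: inner_diff_left)
    qed
    have "inner (\<Phi> d) (\<Phi> d) = 0"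
    proof -
      have "inner (\<Phi> d) (\<Phi> d) = inner (Sa (L a0)) (\<Phi> d) - c2 * inner (\<Phi> a0) (\<Phi> d)"
        unfolding Phid[symmetric] by (simp add: Phid inner_diff_left)
      also have "inner (Sa (L a0)) (\<Phi> d) = inner (L a0) (L d)"
        unfolding L_def by (metis adj inner_commute)
      finally show ?thesis using stat[OF dW] by simp
    qed
    hence "d = 0" using Phi0 by simp
    hence Teq: "T = c2 *\<^sub>R a0" unfolding d_def by simp
    define c where "c = sqrt c2"
    have cpos: "c > 0" and cc: "c * c = c2" unfolding c_def using c2pos by auto
    define w' where "w' = (1 / c) *s (B *v (G *v a0))"
    define e' :: "real^('n+'m)" where "e' = (\<chi> p. case p of Inl k \<Rightarrow> w' $ k | Inr k \<Rightarrow> a0 $ k)"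
    have topE: "blk_top e' = w'" and botE: "blk_bot e' = a0"
      unfolding e'_def blk_top_def blk_bot_def by (simp_all add: vec_eq_iff)
    have "M *v e' = c *s e'"
    proof (rule iffD2[OF vec_eq_iff], intro allI)
      fix p show "(M *v e') $ p = (c *s e') $ p"
      proof (cases p)
        case (Inl k)
        have "(M *v e') $ p = (B *v (G *v a0)) $ k"
          unfolding Inl M_def block_Inl botE by (simp add: matrix_vector_mul_assoc)
        also have "\<dots> = c * w' $ k" unfolding w'_def using cpos by simp
        finally show ?thesis unfolding Inl e'_def by simp
      next
        case (Inr k)
        have "(M *v e') $ p = (transpose B *v (H *v w')) $ k"
          unfolding Inr M_def block_Inr topE by (simp add: matrix_vector_mul_assoc)
        also have "transpose B *v (H *v w') = (1 / c) *s T"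
          unfolding w'_def T_def by (simp add: matrix_vector_mult_scaleR scalar_mult_eq_scaleR)
        also have "((1 / c) *s T) $ k = c * a0 $ k" unfolding Teq using cpos cc[symmetric]
          by (simp add: field_simps)
        finally show ?thesis unfolding Inr e'_def by simp
      qed
    qed
    hence "e' \<in> span (e ` {i. i < r \<and> \<sigma> i = c})"
      using spanA cpos unfolding M_def G_def H_def eigenspace_def by auto
    hence "a0 \<in> span (blk_bot ` e ` {i. i < r \<and> \<sigma> i = c})"
      unfolding span_linear_image[OF blk_bot_linear] botE[symmetric] by blast
    hence "\<Phi> a0 \<in> span (\<Phi> ` blk_bot ` e ` {i. i < r \<and> \<sigma> i = c})"
      unfolding span_linear_image[OF linPhi] by blast
    moreover have "orthogonal (\<Phi> a0) y" if "y \<in> \<Phi> ` blk_bot ` e ` {i. i < r \<and> \<sigma> i = c}" for y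
      using that a0W unfolding Wc_def orthogonal_def v_def z_def by auto
    ultimately have "orthogonal (\<Phi> a0) (\<Phi> a0)" by (rule orthogonal_to_span)
    hence "\<Phi> a0 = 0" by (simp add: orthogonal_def)
    thus False using PhiNZ[OF a0nz] by simp
  qed
  have K: "S h = 0" if "\<forall>j<r. inner h (v j) = 0" for h
  proof -
    have linG: "linear ((*v) G)" by (rule matrix_vector_mul_linear)
    have "inj ((*v) G)"
      unfolding linear_injective_0[OF linG]
    proof (intro allI impI)
      fix a assume "G *v a = 0"
      hence "inner (\<Phi> a) (\<Phi> a) = 0" by (simp add: PhiPhi)
      thus "a = 0" using Phi0 by simp
    qed
    hence "surj ((*v) G)" using linear_injective_imp_surjective linG by auto
    then obtain a where a: "G *v a = fadj \<phi> xs h" by (metis surjD)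
    have fa: "fadj \<phi> xs (\<Phi> a) = fadj \<phi> xs h" unfolding \<Phi>_def G_def using a by (simp add: fadj_fmat G_def)
    have "S h = S (\<Phi> a)" unfolding Sdef using fa by simp
    moreover have "a \<in> Wc" unfolding Wc_def
    proof (intro CollectI allI impI)
      fix j assume "j < r"
      have "inner (\<Phi> a) (v j) = inner (v j) (\<Phi> a)" by (rule inner_commute)
      also have "\<dots> = z j \<bullet> fadj \<phi> xs (\<Phi> a)"
        unfolding v_def \<Phi>_def by (rule inner_fmat_left)
      also have "\<dots> = z j \<bullet> fadj \<phi> xs h" unfolding fa ..
      also have "\<dots> = inner (v j) h"
        unfolding v_def \<Phi>_def by (rule inner_fmat_left[symmetric])
      also have "\<dots> = inner h (v j)" by (rule inner_commute)
      finally show "inner (\<Phi> a) (v j) = 0" using that \<open>j < r\<close> by simp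
    qed
    ultimately show ?thesis using K' unfolding L_def by simp
  qed
  have on_u: "inner (uh i) (uh j) = (if i = j then 1 else 0)" if "i < r" "j < r" for i j
  proof (cases "i = j")
    case True
    have "norm (u i) \<noteq> 0" using nz that by simp
    thus ?thesis using True unfolding uh_def by (simp add: power2_norm_eq_inner[symmetric] power2_eq_square)
  qed (simp add: uh_def orth_u that)
  have on_v: "inner (vh i) (vh j) = (if i = j then 1 else 0)" if "i < r" "j < r" for i j
  proof (cases "i = j")
    case True
    have "norm (v i) \<noteq> 0" using nz that by simp
    thus ?thesis using True unfolding vh_def by (simp add: power2_norm_eq_inner[symmetric] power2_eq_square)
  qed (simp add: vh_def orth_v that)
  have Svh: "S (vh i) = \<sigma> i *\<^sub>R uh i" if "i < r" for i
    unfolding vh_def uh_def using Sv[OF that] normeq[OF that] by (simp add: linear_cmul[OF linS])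
  have decomp: "S h = (\<Sum>i<r. \<sigma> i *\<^sub>R tensor (uh i) (vh i) h)" for h
  proof -
    define c where "c i = inner (vh i) h" for i
    define q where "q = h - (\<Sum>i<r. c i *\<^sub>R vh i)"
    have qvh: "inner q (vh j) = 0" if "j < r" for j
    proof -
      have "inner q (vh j) = inner h (vh j) - (\<Sum>i<r. c i * inner (vh i) (vh j))"
        unfolding q_def by (simp add: inner_diff_left inner_sum_left)
      also have "(\<Sum>i<r. c i * inner (vh i) (vh j)) = (\<Sum>i<r. if i = j then c i else 0)"
        by (rule sum.cong) (simp_all add: on_v that)
      also have "\<dots> = c j" using that by simp
      finally show ?thesis unfolding c_def by (simp add: inner_commute)
    qed
    have "S q = 0"
    proof (rule K, intro allI impI)
      fix j assume j: "j < r"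
      have "v j = norm (v j) *\<^sub>R vh j" unfolding vh_def using nz[OF j] by simp
      hence "inner q (v j) = norm (v j) * inner q (vh j)" by (metis inner_scaleR_right)
      thus "inner q (v j) = 0" using qvh[OF j] by simp
    qed
    have "h = q + (\<Sum>i<r. c i *\<^sub>R vh i)" unfolding q_def by simp
    hence "S h = S q + (\<Sum>i<r. c i *\<^sub>R S (vh i))"
      by (simp add: linear_add[OF linS] linear_sum[OF linS] linear_cmul[OF linS])
    also have "\<dots> = (\<Sum>i<r. c i *\<^sub>R (\<sigma> i *\<^sub>R uh i))" using \<open>S q = 0\<close> Svh by simp
    also have "\<dots> = (\<Sum>i<r. \<sigma> i *\<^sub>R tensor (uh i) (vh i) h)"
      unfolding tensor_def c_def by (simp add: mult.commute)
    finally show ?thesis .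
  qed
  have eqU: "(\<lambda>i. (1 / norm (fmat \<psi> ys (blk_top (e i)))) *\<^sub>R fmat \<psi> ys (blk_top (e i))) = uh"
    by (simp add: fun_eq_iff uh_def u_def w_def \<Psi>_def)
  have eqV: "(\<lambda>i. (1 / norm (fmat \<phi> xs (blk_bot (e i)))) *\<^sub>R fmat \<phi> xs (blk_bot (e i))) = vh"
    by (simp add: fun_eq_iff vh_def v_def z_def \<Phi>_def)
  show ?thesis unfolding eqU eqV is_svd_def orthonormal_sys_def
    using eigA on_u on_v decomp by blast
qed

end
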